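(* Let $a>0$, $L>0$, $k>0$ and fix $t$. Let $\bar u$, $u(t,\cdot)$ be functions on $[0,L]$ with $u_x(t,\cdot),u_t(t,\cdot)\in L^2(0,L)$ such that $0\le \bar u+u\le \frac a2$ on $[0,L]$. Assume $k$ is large enough that $$M_1:=\min\Big\{\tfrac34 k a^2-a-1,\ k-1\Big\}>0,$$ and define $K_1=\frac{1+2L^2}{M_1}$ and $K_2=\max\{k a^2+a+1,\ k+1\}$. Let $$E_1(t)=\int_0^L k\Big[\big(a^2-(\bar u+u)^2\big)u_x^2+u_t^2\Big]-2\exp\Big(-\tfrac xL\Big)\Big[(\bar u+u)u_x^2+u_tu_x\Big]dx.$$ Then $$M_1\int_0^L(u_t^2+u_x^2)\,dx\le E_1(t)\le K_2\int_0^L(u_t^2+u_x^2)\,dx,$$ and $$\int_0^L\big(u_t^2+(1+2L^2)u_x^2\big)\,dx\le K_1E_1(t).$$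
   Context: Here $u_t,u_x$ denote the partial derivatives of $u(t,x)$ evaluated at the fixed time $t$. *)

theory Defs
  imports "HOL-Analysis.Analysis"
begin

definition L2_on :: "real set \<Rightarrow> (real \<Rightarrow> real) \<Rightarrow> bool" where
  "L2_on S f \<longleftrightarrow> f \<in> borel_measurable (lebesgue_on S) \<and>
                  integrable (lebesgue_on S) (\<lambda>x. (f x)^2)"

text \<open>The energy E_1(t); w = ubar + u(t,.), ux = u_x(t,.), ut = u_t(t,.).\<close>
definition E1 :: "real \<Rightarrow> real \<Rightarrow> real \<Rightarrow> (real \<Rightarrow> real) \<Rightarrow> (real \<Rightarrow> real) \<Rightarrow> (real \<Rightarrow> real) \<Rightarrow> real" where
  "E1 k a L w ux ut = (LINT x|lebesgue_on {0..L}.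
      k * ((a^2 - (w x)^2) * (ux x)^2 + (ut x)^2)
      - 2 * exp (- x / L) * (w x * (ux x)^2 + ut x * ux x))"

definition M1 :: "real \<Rightarrow> real \<Rightarrow> real" where
  "M1 k a = min (3/4 * k * a^2 - a - 1) (k - 1)"

definition K1 :: "real \<Rightarrow> real \<Rightarrow> real \<Rightarrow> real" where
  "K1 k a L = (1 + 2 * L^2) / M1 k a"

definition K2 :: "real \<Rightarrow> real \<Rightarrow> real" where
  "K2 k a = max (k * a^2 + a + 1) (k + 1)"

end

theory Submission imports Defs begin
lemma pt:
  fixes a k w e p q :: real
  assumes "0 \<le> w" "w \<le> a/2" "0 < e" "e \<le> 1" "a > 0" "k > 0"
  shows "(3/4*k*a^2-a-1)*p^2 + (k-1)*q^2 \<le> k * ((a^2 - w^2) * p^2 + q^2) - 2 * e * (w * p^2 + q * p)"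
    and "k * ((a^2 - w^2) * p^2 + q^2) - 2 * e * (w * p^2 + q * p) \<le> (k*a^2+1)*p^2 + (k+1)*q^2"
proof -
  have w2: "w^2 \<le> a^2/4" using power_mono[OF assms(2) assms(1), of 2] by (simp add: power_divide)
  have h1: "k*(3/4*a^2)*p^2 \<le> k*(a^2-w^2)*p^2" using w2 assms by (intro mult_right_mono mult_left_mono) auto
  have h1': "k*(a^2-w^2)*p^2 \<le> k*a^2*p^2" using assms by (intro mult_right_mono mult_left_mono) auto
  have ew: "e*w \<le> a/2" using mult_mono[of e 1 w "a/2"] assms by auto
  have h2: "e*w*p^2 \<le> a/2*p^2" using ew by (intro mult_right_mono) auto
  have h2': "0 \<le> e*w*p^2" using assms by auto
  have sq: "2*\<bar>q*p\<bar> \<le> q^2+p^2"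
  proof -
    have "0 \<le> (\<bar>q\<bar>-\<bar>p\<bar>)^2" by simp
    thus ?thesis by (simp add: power2_eq_square abs_mult algebra_simps)
  qed
  have h3: "\<bar>e*(q*p)\<bar> \<le> \<bar>q*p\<bar>" using assms by (simp add: abs_mult mult_left_le_one_le)
  have h3': "\<bar>2*e*(q*p)\<bar> \<le> q^2+p^2" using h3 sq by (simp add: abs_mult)
  show "(3/4*k*a^2-a-1)*p^2 + (k-1)*q^2 \<le> k * ((a^2 - w^2) * p^2 + q^2) - 2 * e * (w * p^2 + q * p)"
    using h1 h2 h3' by (simp add: algebra_simps abs_le_iff)
  show "k * ((a^2 - w^2) * p^2 + q^2) - 2 * e * (w * p^2 + q * p) \<le> (k*a^2+1)*p^2 + (k+1)*q^2"
    using h1' h2' h3' by (simp add: algebra_simps abs_le_iff)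
qed

theorem lemma1:
  fixes a L k t :: real
    and ubar :: "real \<Rightarrow> real"
    and u ux ut :: "real \<Rightarrow> real \<Rightarrow> real"
  assumes "a > 0" "L > 0" "k > 0"
    and "(\<lambda>x. ubar x + u t x) \<in> borel_measurable (lebesgue_on {0..L})"
    and "L2_on {0..L} (ux t)" "L2_on {0..L} (ut t)"
    and "\<forall>x\<in>{0..L}. 0 \<le> ubar x + u t x \<and> ubar x + u t x \<le> a / 2"
    and "M1 k a > 0"
  shows "M1 k a * (LINT x|lebesgue_on {0..L}. (ut t x)^2 + (ux t x)^2)
           \<le> E1 k a L (\<lambda>x. ubar x + u t x) (ux t) (ut t)
       \<and> E1 k a L (\<lambda>x. ubar x + u t x) (ux t) (ut t)
           \<le> K2 k a * (LINT x|lebesgue_on {0..L}. (ut t x)^2 + (ux t x)^2)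
       \<and> (LINT x|lebesgue_on {0..L}. (ut t x)^2 + (1 + 2 * L^2) * (ux t x)^2)
           \<le> K1 k a L * E1 k a L (\<lambda>x. ubar x + u t x) (ux t) (ut t)"
proof -
  define M where "M = lebesgue_on {0..L}"
  define w where "w = (\<lambda>x. ubar x + u t x)"
  define p where "p = ux t"
  define q where "q = ut t"
  define f where "f = (\<lambda>x. k * ((a^2 - (w x)^2) * (p x)^2 + (q x)^2)
      - 2 * exp (- x / L) * (w x * (p x)^2 + q x * p x))"
  define g where "g = (\<lambda>x. (q x)^2 + (p x)^2)"
  have wm: "w \<in> borel_measurable M" using assms(4) by (simp add: w_def M_def)
  have pm: "p \<in> borel_measurable M" and pi: "integrable M (\<lambda>x. (p x)^2)"
    using assms(5) by (auto simp: L2_on_def p_def M_def)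
  have qm: "q \<in> borel_measurable M" and qi: "integrable M (\<lambda>x. (q x)^2)"
    using assms(6) by (auto simp: L2_on_def q_def M_def)
  have gi: "integrable M g" unfolding g_def using pi qi by simp
  have em: "(\<lambda>x::real. exp (- x / L)) \<in> borel_measurable M"
    unfolding M_def by (intro continuous_imp_measurable_on_sets_lebesgue) (use assms(2) in \<open>auto intro!: continuous_intros\<close>)
  have fm: "f \<in> borel_measurable M" unfolding f_def using wm pm qm em by measurable
  have sp: "space M = {0..L}" by (simp add: M_def)
  have lo: "M1 k a * g x \<le> f x" and up: "f x \<le> K2 k a * g x" if "x \<in> {0..L}" for x
  proof -
    have w: "0 \<le> w x" "w x \<le> a/2" using assms(7) that by (auto simp: w_def)
    have e: "0 < exp (- x / L)" "exp (- x/L) \<le> 1" using that assms(2) by auto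
    note P = pt[OF w e assms(1) assms(3), of "p x" "q x"]
    have "M1 k a * g x = M1 k a * (p x)^2 + M1 k a * (q x)^2" by (simp add: g_def algebra_simps)
    also have "\<dots> \<le> (3/4*k*a^2-a-1)*(p x)^2 + (k-1)*(q x)^2"
      unfolding M1_def by (intro add_mono mult_right_mono) auto
    finally have "M1 k a * g x \<le> (3/4*k*a^2-a-1)*(p x)^2 + (k-1)*(q x)^2" .
    then show "M1 k a * g x \<le> f x" using P(1) by (simp add: f_def)
    have "(k*a^2+1)*(p x)^2 + (k+1)*(q x)^2 \<le> K2 k a * (p x)^2 + K2 k a * (q x)^2"
      unfolding K2_def using assms(1) by (intro add_mono mult_right_mono) auto
    also have "\<dots> = K2 k a * g x" by (simp add: g_def algebra_simps)
    finally have "(k*a^2+1)*(p x)^2 + (k+1)*(q x)^2 \<le> K2 k a * g x" .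
    then show "f x \<le> K2 k a * g x" using P(2) by (simp add: f_def)
  qed
  have K2p: "0 \<le> K2 k a" unfolding K2_def using assms by auto
  have fi: "integrable M f"
  proof (rule Bochner_Integration.integrable_bound[OF _ fm])
    show "integrable M (\<lambda>x. K2 k a * g x)" using gi by simp
    show "AE x in M. norm (f x) \<le> norm (K2 k a * g x)"
    proof (rule AE_I2)
      fix x assume "x \<in> space M"
      hence x: "x \<in> {0..L}" using sp by simp
      have "0 \<le> g x" by (simp add: g_def)
      hence "0 \<le> M1 k a * g x" using assms(8) by simp
      thus "norm (f x) \<le> norm (K2 k a * g x)" using lo[OF x] up[OF x] K2p \<open>0 \<le> g x\<close> by simp
    qed
  qed
  have E: "E1 k a L w p q = integral\<^sup>L M f" by (simp add: E1_def M_def f_def)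
  have I1: "M1 k a * integral\<^sup>L M g \<le> integral\<^sup>L M f"
    using integral_mono[of M "\<lambda>x. M1 k a * g x" f] gi fi lo sp by simp
  have I2: "integral\<^sup>L M f \<le> K2 k a * integral\<^sup>L M g"
    using integral_mono[of M f "\<lambda>x. K2 k a * g x"] gi fi up sp by simp
  define c where "c = 1 + 2 * L^2"
  have c1: "1 \<le> c" by (simp add: c_def)
  have hi: "integrable M (\<lambda>x. (q x)^2 + c * (p x)^2)" using pi qi by simp
  have I3: "integral\<^sup>L M (\<lambda>x. (q x)^2 + c * (p x)^2) \<le> integral\<^sup>L M (\<lambda>x. c * g x)"
  proof (rule integral_mono[OF hi])
    show "integrable M (\<lambda>x. c * g x)" using gi by simp
    fix x
    have "(q x)^2 \<le> c * (q x)^2" using c1 by (simp add: mult_le_cancel_right1)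
    thus "(q x)^2 + c * (p x)^2 \<le> c * g x" by (simp add: g_def algebra_simps)
  qed
  have I4: "c * integral\<^sup>L M g \<le> K1 k a L * integral\<^sup>L M f"
  proof -
    have "c * integral\<^sup>L M g = (c / M1 k a) * (M1 k a * integral\<^sup>L M g)" using assms(8) by simp
    also have "\<dots> \<le> (c / M1 k a) * integral\<^sup>L M f"
      using I1 assms(8) c1 by (intro mult_left_mono) auto
    finally show ?thesis by (simp add: K1_def c_def)
  qed
  have "integral\<^sup>L M (\<lambda>x. (q x)^2 + c * (p x)^2) \<le> K1 k a L * integral\<^sup>L M f"
    using I3 I4 by simp
  thus ?thesis using I1 I2 E
    unfolding M_def w_def p_def q_def g_def c_def by simp
qed

end
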